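(* For every $t\in\mathbb{N}$ and $C>0$ there is $\varepsilon_0>0$ such that the following holds for every integer $m\ge 3$. If $0<\varepsilon<\varepsilon_0$ and $\mathcal{G},\mathcal{H}\subset[m]^n$ satisfy $\mu(\mathcal{H})=m^{-t}\varepsilon$ and $\mu(\mathcal{G})>1-C\varepsilon$, then ${\sf agr}(x,y)=0$ for some $x\in\mathcal{G}$ and $y\in\mathcal{H}$.
   Context: $[m]=\{1,\dots,m\}$, $\mu$ is the uniform probability measure on $[m]^n$, and ${\sf agr}(x,y)=|\{i\in[n]:x_i=y_i\}|$. *)

theory Defs
  imports Main Complex_Main
begin

definition cube :: "nat \<Rightarrow> nat \<Rightarrow> nat list set" where
  "cube m n = {x. length x = n \<and> set x \<subseteq> {1..m}}"

definition mu :: "nat \<Rightarrow> nat \<Rightarrow> nat list set \<Rightarrow> real" where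
  "mu m n A = real (card A) / real m ^ n"

definition agr :: "nat list \<Rightarrow> nat list \<Rightarrow> nat" where
  "agr x y = card {i. i < length x \<and> i < length y \<and> x ! i = y ! i}"

end

theory Submission
  imports Defs "HOL-Analysis.Convex"
begin

definition nbr :: "nat \<Rightarrow> nat \<Rightarrow> nat list set \<Rightarrow> nat list set" where
  "nbr m n A = {x \<in> cube m n. \<exists>y\<in>A. agr x y = 0}"
definition slice :: "nat \<Rightarrow> nat list set \<Rightarrow> nat list set" where
  "slice b S = {x. b # x \<in> S}"

lemma cube_eq: "cube m n = {xs. set xs \<subseteq> {1..m} \<and> length xs = n}"
  unfolding cube_def by auto

lemma finite_cube: "finite (cube m n)"
  unfolding cube_eq by (rule finite_lists_length_eq) simp

lemma card_cube: "card (cube m n) = m ^ n"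
  unfolding cube_eq by (subst card_lists_length_eq) auto

lemma agr_zero_iff: "agr x y = 0 \<longleftrightarrow> (\<forall>i. i < length x \<longrightarrow> i < length y \<longrightarrow> x ! i \<noteq> y ! i)"
proof -
  have "finite {i. i < length x \<and> i < length y \<and> x ! i = y ! i}" by simp
  then show ?thesis unfolding agr_def by auto
qed

lemma agr_Cons: "a \<noteq> b \<Longrightarrow> agr x y = 0 \<Longrightarrow> agr (b # x) (a # y) = 0"
  unfolding agr_zero_iff by (auto simp: nth_Cons split: nat.splits)

lemma slice_cube: "S \<subseteq> cube m (Suc n) \<Longrightarrow> slice b S \<subseteq> cube m n"
  unfolding slice_def
proof
  fix x assume "S \<subseteq> cube m (Suc n)" "x \<in> {x. b # x \<in> S}"
  then have "b # x \<in> cube m (Suc n)" by auto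
  then show "x \<in> cube m n" unfolding cube_def by auto
qed

lemma card_slices:
  assumes "S \<subseteq> cube m (Suc n)"
  shows "card S = (\<Sum>b\<in>{1..m}. card (slice b S))"
proof -
  have fS: "finite S" using assms finite_cube finite_subset by blast
  have eq: "S = (\<Union>b\<in>{1..m}. (Cons b) ` slice b S)"
  proof
    show "S \<subseteq> (\<Union>b\<in>{1..m}. (Cons b) ` slice b S)"
    proof
      fix x assume x: "x \<in> S"
      then obtain b xs where "x = b # xs" using assms unfolding cube_def
        by (cases x) auto
      moreover have "b \<in> {1..m}" using x assms calculation unfolding cube_def by auto
      ultimately show "x \<in> (\<Union>b\<in>{1..m}. (Cons b) ` slice b S)" using x
        unfolding slice_def by auto
    qed
    show "(\<Union>b\<in>{1..m}. (Cons b) ` slice b S) \<subseteq> S" unfolding slice_def by auto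
  qed
  have "card S = (\<Sum>b\<in>{1..m}. card ((Cons b) ` slice b S))"
    apply (subst eq)
    apply (rule card_UN_disjoint)
      apply simp
    using fS apply (auto intro: finite_subset[of _ S] simp: slice_def)[1]
    by auto
  also have "\<dots> = (\<Sum>b\<in>{1..m}. card (slice b S))"
    by (intro sum.cong refl card_image) auto
  finally show ?thesis .
qed

lemma slice_nbr:
  assumes "a \<noteq> b" "b \<in> {1..m}"
  shows "nbr m n (slice a A) \<subseteq> slice b (nbr m (Suc n) A)"
proof
  fix x assume "x \<in> nbr m n (slice a A)"
  then obtain y where "x \<in> cube m n" "a # y \<in> A" "agr x y = 0"
    unfolding nbr_def slice_def by auto
  then show "x \<in> slice b (nbr m (Suc n) A)"
    using assms agr_Cons[of a b x y] unfolding nbr_def slice_def cube_def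
    by (auto intro!: bexI[of _ "a # y"])
qed

lemma young1:
  fixes y \<beta> :: real
  assumes "0 \<le> y" "0 < \<beta>" "\<beta> \<le> 1"
  shows "y powr \<beta> \<le> 1 + \<beta> * (y - 1)"
proof (cases "y = 0")
  case True then show ?thesis using assms by simp
next
  case False
  then have "y powr \<beta> * 1 powr (1 - \<beta>) \<le> \<beta> * y + (1 - \<beta>) * 1"
    using assms by (intro Youngs_inequality_0) auto
  then show ?thesis by (simp add: algebra_simps)
qed

lemma key_ineq:
  fixes M s k :: real
  assumes "k \<ge> 1" "0 \<le> s" "s \<le> M"
  shows "((M + k * s) / (k + 1)) powr (1 / k) \<le> (k * M powr (1 / k) + s powr (1 / k)) / (k + 1)"
proof (cases "M = 0")
  case True
  then show ?thesis using assms by simp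
next
  case False
  then have M: "M > 0" using assms by simp
  define r where "r = s / M"
  have r0: "0 \<le> r" and r1: "r \<le> 1" using assms M by (auto simp: r_def)
  have sr: "s = M * r" using M by (simp add: r_def)
  have eqn: "(M + k * s) / (k + 1) = M * ((1 + k * r) / (k + 1))"
    using sr by (simp add: algebra_simps)
  have "((M + k * s) / (k + 1)) powr (1 / k) = M powr (1/k) * ((1 + k * r) / (k + 1)) powr (1 / k)"
    unfolding eqn using M r0 assms by (intro powr_mult)
  also have "((1 + k * r) / (k + 1)) powr (1 / k) \<le> 1 + (1/k) * ((1 + k * r) / (k + 1) - 1)"
    using assms r0 by (intro young1) auto
  also have "1 + (1/k) * ((1 + k * r) / (k + 1) - 1) = (k + r) / (k + 1)"
  proof -
    have k0: "k > 0" "k + 1 > 0" using assms by auto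
    have "(1 + k * r) / (k + 1) - 1 = k * (r - 1) / (k + 1)"
      using k0 by (simp add: field_simps)
    then have "(1/k) * ((1 + k * r) / (k + 1) - 1) = (r - 1) / (k + 1)"
      using k0 by simp
    also have "1 + (r - 1) / (k + 1) = (k + r) / (k + 1)"
      using k0 by (simp add: field_simps)
    finally show ?thesis by (metis add_diff_cancel_left' diff_add_cancel)
  qed
  also have "r \<le> r powr (1/k)"
  proof -
    have "r powr 1 \<le> r powr (1/k)" using r0 r1 assms by (intro powr_mono') auto
    then show ?thesis using r0 by simp
  qed
  then have "(k + r) / (k + 1) \<le> (k + r powr (1/k)) / (k + 1)"
    using assms by (intro divide_right_mono) auto
  finally have "((M + k * s) / (k + 1)) powr (1 / k) \<le> M powr (1/k) * ((k + r powr (1/k)) / (k + 1))"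
    using M by (simp add: mult_left_mono)
  also have "\<dots> = (k * M powr (1 / k) + s powr (1 / k)) / (k + 1)"
    using M r0 sr by (simp add: powr_mult field_simps)
  finally show ?thesis .
qed

lemma ex_max_on:
  fixes f :: "'a \<Rightarrow> real"
  assumes "finite S" "S \<noteq> {}"
  shows "\<exists>x\<in>S. \<forall>y\<in>S. f y \<le> f x"
proof -
  have "Max (f ` S) \<in> f ` S" using assms by (intro Max_in) auto
  then obtain x where x: "x \<in> S" "f x = Max (f ` S)" by auto
  have "\<forall>y\<in>S. f y \<le> f x" using x assms by auto
  then show ?thesis using x by blast
qed

lemma mu_nonneg: "0 \<le> mu m n A"
  unfolding mu_def by simp

lemma mu_mono: "B \<subseteq> cube m n \<Longrightarrow> A \<subseteq> B \<Longrightarrow> mu m n A \<le> mu m n B"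
  unfolding mu_def
  by (intro divide_right_mono) (auto intro: card_mono finite_subset[OF _ finite_cube])

lemma mu_slices:
  assumes "S \<subseteq> cube m (Suc n)"
  shows "mu m (Suc n) S = (\<Sum>b\<in>{1..m}. mu m n (slice b S)) / real m"
proof -
  have "mu m (Suc n) S = real (\<Sum>b\<in>{1..m}. card (slice b S)) / (real m * real m ^ n)"
    unfolding mu_def using card_slices[OF assms] by simp
  also have "\<dots> = (\<Sum>b\<in>{1..m}. mu m n (slice b S)) / real m"
    unfolding mu_def by (simp add: sum_divide_distrib[symmetric] field_simps)
  finally show ?thesis .
qed

lemma expansion:
  assumes m: "m \<ge> 2"
  shows "A \<subseteq> cube m n \<Longrightarrow> mu m n A powr (1 / (real m - 1)) \<le> mu m n (nbr m n A)"
proof (induction n arbitrary: A)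
  case 0
  have c0: "cube m 0 = {[]}" unfolding cube_def by auto
  show ?case
  proof (cases "A = {}")
    case True then show ?thesis by (simp add: mu_def)
  next
    case False
    then have A: "A = {[]}" using 0 c0 by auto
    have "nbr m 0 A = {[]}" unfolding nbr_def A c0 agr_def by auto
    then show ?thesis using A by (simp add: mu_def)
  qed
next
  case (Suc n)
  define k where "k = real m - 1"
  have k1: "k \<ge> 1" using m by (simp add: k_def)
  have km: "k + 1 = real m" by (simp add: k_def)
  define f where "f b = mu m n (slice b A)" for b
  define g where "g b = mu m n (slice b (nbr m (Suc n) A))" for b
  have NA: "nbr m (Suc n) A \<subseteq> cube m (Suc n)" unfolding nbr_def by auto
  have IHs: "f b powr (1/k) \<le> mu m n (nbr m n (slice b A))" for b
    unfolding f_def k_def by (intro Suc.IH slice_cube Suc.prems)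
  have gmono: "mu m n (nbr m n (slice a A)) \<le> g b" if "a \<noteq> b" "b \<in> {1..m}" for a b
    unfolding g_def by (intro mu_mono slice_cube NA slice_nbr that)
  obtain a1 where a1: "a1 \<in> {1..m}" "\<forall>b\<in>{1..m}. f b \<le> f a1"
    using ex_max_on[of "{1..m}" f] m by auto
  have "(if a1 = 1 then 2 else 1) \<in> {1..m} - {a1}" using m a1 by auto
  then have ne: "{1..m} - {a1} \<noteq> {}" by blast
  obtain a2 where a2: "a2 \<in> {1..m} - {a1}" "\<forall>b\<in>{1..m} - {a1}. f b \<le> f a2"
    using ex_max_on[of "{1..m} - {a1}" f] ne by (meson finite_Diff finite_atLeastAtMost)
  define M where "M = f a1"
  define s where "s = f a2"
  have s0: "0 \<le> s" unfolding s_def f_def by (rule mu_nonneg)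
  have sM: "s \<le> M" unfolding s_def M_def using a1 a2 by auto
  have cardm: "real (card ({1..m} - {a1})) = k"
    using a1 by (simp add: k_def)
  have "(\<Sum>b\<in>{1..m}. f b) = f a1 + (\<Sum>b\<in>{1..m} - {a1}. f b)"
    using a1 by (simp add: sum.remove)
  also have "(\<Sum>b\<in>{1..m} - {a1}. f b) \<le> (\<Sum>b\<in>{1..m} - {a1}. s)"
    using a2 unfolding s_def by (intro sum_mono) auto
  finally have sumf: "(\<Sum>b\<in>{1..m}. f b) \<le> M + k * s"
    using cardm by (simp add: M_def)
  have gA1: "s powr (1/k) \<le> g a1"
    using IHs[of a2] gmono[of a2 a1] a1 a2 unfolding s_def by auto
  have gB: "M powr (1/k) \<le> g b" if "b \<in> {1..m} - {a1}" for b
    using IHs[of a1] gmono[of a1 b] that unfolding M_def by auto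
  have g1: "(\<Sum>b\<in>{1..m}. g b) = g a1 + (\<Sum>b\<in>{1..m} - {a1}. g b)"
    using a1 by (simp add: sum.remove)
  have g2: "(\<Sum>b\<in>{1..m} - {a1}. g b) \<ge> (\<Sum>b\<in>{1..m} - {a1}. M powr (1/k))"
    using gB by (intro sum_mono) auto
  from g1 g2 have sumg: "(\<Sum>b\<in>{1..m}. g b) \<ge> k * M powr (1/k) + s powr (1/k)"
    using cardm gA1 by simp
  have muA: "mu m (Suc n) A = (\<Sum>b\<in>{1..m}. f b) / (k + 1)"
    unfolding f_def km by (rule mu_slices[OF Suc.prems])
  have muN: "mu m (Suc n) (nbr m (Suc n) A) = (\<Sum>b\<in>{1..m}. g b) / (k + 1)"
    unfolding g_def km by (rule mu_slices[OF NA])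
  have "mu m (Suc n) A powr (1/k) \<le> ((M + k * s) / (k + 1)) powr (1/k)"
    unfolding muA using sumf k1 mu_nonneg
    by (intro powr_mono2 divide_right_mono divide_nonneg_pos sum_nonneg) (auto simp: f_def)
  also have "\<dots> \<le> (k * M powr (1 / k) + s powr (1 / k)) / (k + 1)"
    by (rule key_ineq[OF k1 s0 sM])
  also have "\<dots> \<le> mu m (Suc n) (nbr m (Suc n) A)"
    unfolding muN using sumg k1 by (intro divide_right_mono) auto
  finally show ?case by (simp add: k_def)
qed

lemma m_powr_le2:
  assumes "m \<ge> (3::nat)"
  shows "real m powr (1 / (real m - 1)) \<le> 2"
proof -
  have "m - 1 < 2 ^ (m - 1)" by (rule less_exp)
  then have "Suc (m - 1) \<le> 2 ^ (m - 1)" by (rule Suc_leI)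
  then have "m \<le> 2 ^ (m - 1)" using assms by simp
  then have le0: "real m \<le> 2 ^ (m - 1)"
    by (metis of_nat_le_iff of_nat_numeral of_nat_power)
  have "(2::real) powr (real m - 1) = 2 powr (real (m - 1))"
    using assms by (simp add: of_nat_diff)
  also have "\<dots> = 2 ^ (m - 1)" by (simp add: powr_realpow)
  finally have le: "real m \<le> 2 powr (real m - 1)" using le0 by simp
  have "real m powr (1 / (real m - 1)) \<le> (2 powr (real m - 1)) powr (1 / (real m - 1))"
    using le assms by (intro powr_mono2) auto
  also have "\<dots> = 2" using assms by (simp add: powr_powr)
  finally show ?thesis .
qed

lemma lower_bound:
  fixes C \<epsilon> :: real and m t :: nat
  assumes m: "m \<ge> 3" and C: "C > 0" and e0: "0 < \<epsilon>" and e1: "\<epsilon> < min 1 (1 / (C^2 * 4^t))"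
  shows "C * \<epsilon> \<le> (\<epsilon> / real m ^ t) powr (1 / (real m - 1))"
proof -
  define \<beta> where "\<beta> = 1 / (real m - 1)"
  have b0: "0 < \<beta>" and bh: "\<beta> \<le> 1/2" using m by (auto simp: \<beta>_def field_simps)
  have mpos: "real m > 0" using m by simp
  have "(real m ^ t) powr \<beta> = (real m powr real t) powr \<beta>"
    using mpos by (simp add: powr_realpow)
  also have "\<dots> = (real m powr \<beta>) powr real t" by (simp add: powr_powr mult.commute)
  also have "\<dots> = (real m powr \<beta>) ^ t" using mpos by (simp add: powr_realpow)
  also have "\<dots> \<le> 2 ^ t" using m_powr_le2[OF m] unfolding \<beta>_def
    by (intro power_mono) auto
  finally have den: "(real m ^ t) powr \<beta> \<le> 2 ^ t" .
  have denpos: "(real m ^ t) powr \<beta> > 0" using mpos by simp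
  have "sqrt \<epsilon> = \<epsilon> powr (1/2)" using e0 by (simp add: powr_half_sqrt)
  also have "\<dots> \<le> \<epsilon> powr \<beta>" using e0 e1 bh by (intro powr_mono') auto
  finally have num: "sqrt \<epsilon> \<le> \<epsilon> powr \<beta>" .
  have "(\<epsilon> / real m ^ t) powr \<beta> = \<epsilon> powr \<beta> / (real m ^ t) powr \<beta>"
    using e0 mpos by (simp add: powr_divide)
  also have "\<dots> \<ge> sqrt \<epsilon> / 2 ^ t"
    using num den denpos e0 by (intro frac_le) auto
  finally have L: "sqrt \<epsilon> / 2 ^ t \<le> (\<epsilon> / real m ^ t) powr \<beta>" .
  have p4: "((2::real)^t)^2 = 4^t" by (simp add: power2_eq_square power_mult_distrib[symmetric])
  have "(C * 2^t)^2 = C^2 * 4^t" by (simp add: power_mult_distrib p4)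
  then have "\<epsilon> < 1 / (C * 2^t)^2" using e1 by simp
  then have "sqrt \<epsilon> < sqrt (1 / (C * 2^t)^2)" by (simp only: real_sqrt_less_iff)
  also have "\<dots> = 1 / (C * 2^t)" using C by (simp add: real_sqrt_divide)
  finally have sq: "sqrt \<epsilon> * (C * 2^t) < 1" using C by (simp add: field_simps)
  have "C * \<epsilon> = (sqrt \<epsilon> * (C * 2^t)) * sqrt \<epsilon> / 2^t"
    using e0 by (simp add: field_simps)
  also have "\<dots> \<le> 1 * sqrt \<epsilon> / 2^t"
    using sq e0 by (intro divide_right_mono mult_right_mono) auto
  finally show ?thesis using L by (simp add: \<beta>_def)
qed

theorem theorem2p3:
  fixes t :: nat and C :: real
  assumes "C > 0"
  shows "\<exists>\<epsilon>0 > 0. \<forall>m::nat. m \<ge> 3 \<longrightarrow> (\<forall>\<epsilon>::real. 0 < \<epsilon> \<and> \<epsilon> < \<epsilon>0 \<longrightarrow>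
           (\<forall>n::nat. \<forall>G H. G \<subseteq> cube m n \<and> H \<subseteq> cube m n \<and>
              mu m n H = \<epsilon> / real m ^ t \<and> mu m n G > 1 - C * \<epsilon> \<longrightarrow>
              (\<exists>x\<in>G. \<exists>y\<in>H. agr x y = 0)))"
proof (intro exI[of _ "min 1 (1 / (C^2 * 4^t))"] conjI allI impI)
  show "0 < min 1 (1 / (C^2 * 4^t))" using assms by simp
next
  fix m :: nat and \<epsilon> :: real and n G H
  assume m: "3 \<le> m" and e: "0 < \<epsilon> \<and> \<epsilon> < min 1 (1 / (C^2 * 4^t))"
    and GH: "G \<subseteq> cube m n \<and> H \<subseteq> cube m n \<and> mu m n H = \<epsilon> / real m ^ t \<and> mu m n G > 1 - C * \<epsilon>"
  show "\<exists>x\<in>G. \<exists>y\<in>H. agr x y = 0"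
  proof (rule ccontr)
    assume no: "\<not> (\<exists>x\<in>G. \<exists>y\<in>H. agr x y = 0)"
    have disj: "G \<inter> nbr m n H = {}" using no unfolding nbr_def by blast
    have sub: "G \<union> nbr m n H \<subseteq> cube m n" using GH unfolding nbr_def by auto
    have fin: "finite G" "finite (nbr m n H)"
      using sub finite_cube finite_subset by blast+
    have "card G + card (nbr m n H) = card (G \<union> nbr m n H)"
      using disj fin by (simp add: card_Un_disjoint)
    also have "\<dots> \<le> m ^ n" using sub card_mono[OF finite_cube sub] card_cube by simp
    finally have "real (card G) + real (card (nbr m n H)) \<le> real m ^ n"
      by (metis of_nat_add of_nat_le_iff of_nat_power)
    then have "mu m n G + mu m n (nbr m n H) \<le> 1"
      using m unfolding mu_def by (simp add: add_divide_distrib[symmetric])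
    then have up: "mu m n (nbr m n H) < C * \<epsilon>" using GH by linarith
    have "C * \<epsilon> \<le> (\<epsilon> / real m ^ t) powr (1 / (real m - 1))"
      using lower_bound[OF m assms] e by auto
    also have "\<dots> \<le> mu m n (nbr m n H)"
      using expansion[of m H n] GH m by auto
    finally show False using up by simp
  qed
qed

end
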